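(* Let $q$ be a prime power, $V$ a $v$-dimensional vector space over $\mathrm{GF}(q)$, $\mathcal{G}$ a $(g-1)$-spread of $V$, and let $G$ be a subgroup of the stabilizer of $\mathcal{G}$ in $\mathrm{P\Gamma L}(v,q)$ (acting on the subspaces of $V$). Suppose $G$ acts transitively on the set of $2$-dimensional subspaces of $V$ that are not contained in any element of $\mathcal{G}$. Let $k\ge 2$ and let $\mathcal{B}$ be any union of $G$-orbits on the set of $k$-dimensional subspaces of $V$ that are scattered with respect to $\mathcal{G}$. Then there is an integer $\lambda$ such that every $2$-dimensional subspace of $V$ not contained in any element of $\mathcal{G}$ is contained in exactly $\lambda$ elements of $\mathcal{B}$; that is, $(V,\mathcal{G},\mathcal{B})$ is a $(v,g,k,\lambda)_q$-GDD for a suitable value $\lambda$.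
   Context: A $(g-1)$-spread of $V$ is a set of $g$-dimensional subspaces of $V$ such that every $1$-dimensional subspace of $V$ lies in exactly one of them. A subspace $B\le V$ is scattered with respect to $\mathcal{G}$ if $B$ contains no $2$-dimensional subspace contained in an element of $\mathcal{G}$. A $(v,g,k,\lambda)_q$-GDD is a triple $(V,\mathcal{G},\mathcal{B})$ with $V$ a $v$-dimensional $\mathrm{GF}(q)$-space, $\mathcal{G}$ a $(g-1)$-spread of $V$ with $\#\mathcal{G}>1$, $\mathcal{B}$ a set of $k$-dimensional subspaces of $V$, such that every $2$-dimensional subspace of $V$ is either contained in an element of $\mathcal{G}$ and in no element of $\mathcal{B}$, or in no element of $\mathcal{G}$ and in exactly $\lambda$ elements of $\mathcal{B}$. *)

theory Defs
  imports "HOL-Analysis.Analysis"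
begin

text \<open>Ambient space: V = GF(q)^v, modelled as the type 'a ^ 'n with 'a a finite field
  (so q = CARD('a) is a prime power) and v = CARD('n).\<close>

definition sub_dim :: "nat \<Rightarrow> ('a::field ^ 'n) set \<Rightarrow> bool" where
  "sub_dim d U \<longleftrightarrow> vec.subspace U \<and> vec.dim U = d"

definition is_spread :: "nat \<Rightarrow> ('a::field ^ 'n) set set \<Rightarrow> bool" where
  "is_spread g S \<longleftrightarrow> (\<forall>X\<in>S. sub_dim g X) \<and>
     (\<forall>P. sub_dim 1 P \<longrightarrow> (\<exists>!X. X \<in> S \<and> P \<subseteq> X))"

definition scattered :: "('a::field ^ 'n) set set \<Rightarrow> ('a ^ 'n) set \<Rightarrow> bool" where
  "scattered S B \<longleftrightarrow> \<not> (\<exists>L. sub_dim 2 L \<and> L \<subseteq> B \<and> (\<exists>X\<in>S. L \<subseteq> X))"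

definition is_GDD :: "nat \<Rightarrow> nat \<Rightarrow> nat \<Rightarrow> nat \<Rightarrow>
    ('a::field ^ 'n) set set \<Rightarrow> ('a ^ 'n) set set \<Rightarrow> bool" where
  "is_GDD v g k lam S B \<longleftrightarrow> CARD('n) = v \<and> is_spread g S \<and> card S > 1 \<and>
     (\<forall>X\<in>B. sub_dim k X) \<and>
     (\<forall>L. sub_dim 2 L \<longrightarrow>
        ((\<exists>X\<in>S. L \<subseteq> X) \<and> (\<forall>X\<in>B. \<not> L \<subseteq> X)) \<or>
        ((\<forall>X\<in>S. \<not> L \<subseteq> X) \<and> card {X\<in>B. L \<subseteq> X} = lam))"

text \<open>Field automorphisms and semilinear bijections (elements of GammaL(v,q)); a subgroup
  of PGammaL(v,q) acting on subspaces is represented by its preimage in GammaL(v,q),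
  a group of semilinear bijections acting by U \<mapsto> f ` U.\<close>
definition field_aut :: "('a::field \<Rightarrow> 'a) \<Rightarrow> bool" where
  "field_aut \<sigma> \<longleftrightarrow> bij \<sigma> \<and> (\<forall>a b. \<sigma> (a + b) = \<sigma> a + \<sigma> b) \<and> (\<forall>a b. \<sigma> (a * b) = \<sigma> a * \<sigma> b)"

definition semilinear_bij :: "('a::field ^ 'n \<Rightarrow> 'a ^ 'n) \<Rightarrow> bool" where
  "semilinear_bij f \<longleftrightarrow> bij f \<and> (\<exists>\<sigma>. field_aut \<sigma> \<and>
     (\<forall>x y. f (x + y) = f x + f y) \<and> (\<forall>c x. f (c *s x) = \<sigma> c *s f x))"

definition is_GammaL_subgroup :: "('a::field ^ 'n \<Rightarrow> 'a ^ 'n) set \<Rightarrow> bool" where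
  "is_GammaL_subgroup G \<longleftrightarrow> (\<forall>f\<in>G. semilinear_bij f) \<and> id \<in> G \<and>
     (\<forall>f\<in>G. \<forall>h\<in>G. f \<circ> h \<in> G) \<and> (\<forall>f\<in>G. inv f \<in> G)"

end

theory Submission
  imports Defs
begin

lemma card_transfer:
  fixes G :: "('a::{finite,field} ^ 'n \<Rightarrow> 'a ^ 'n) set"
  assumes grp: "is_GammaL_subgroup G"
    and B_inv: "\<forall>f\<in>G. \<forall>X\<in>B. f ` X \<in> B"
    and f: "f \<in> G"
  shows "card {X\<in>B. L \<subseteq> X} = card {X\<in>B. f ` L \<subseteq> X}"
proof -
  have bf: "bij f" using grp f unfolding is_GammaL_subgroup_def semilinear_bij_def by blast
  have fi: "inv f \<in> G" using grp f unfolding is_GammaL_subgroup_def by blast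
  have injf: "inj f" using bf bij_is_inj by blast
  have inj: "inj_on (image f) {X\<in>B. L \<subseteq> X}"
    by (meson inj_image_eq_iff inj_onI injf)
  have im: "(image f) ` {X\<in>B. L \<subseteq> X} = {X\<in>B. f ` L \<subseteq> X}"
  proof
    show "(image f) ` {X\<in>B. L \<subseteq> X} \<subseteq> {X\<in>B. f ` L \<subseteq> X}"
      using B_inv f by auto
  next
    show "{X\<in>B. f ` L \<subseteq> X} \<subseteq> (image f) ` {X\<in>B. L \<subseteq> X}"
    proof
      fix Y assume Y: "Y \<in> {X\<in>B. f ` L \<subseteq> X}"
      have "inv f ` Y \<in> B" using B_inv fi Y by blast
      moreover have "f ` (inv f ` Y) = Y"
        using bf by (simp add: bij_is_surj image_f_inv_f)
      moreover have "L \<subseteq> inv f ` Y"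
      proof -
        have "f ` L \<subseteq> Y" using Y by simp
        then have "inv f ` (f ` L) \<subseteq> inv f ` Y" by (rule image_mono)
        then show ?thesis using image_inv_f_f[OF injf] by simp
      qed
      ultimately have "inv f ` Y \<in> {X\<in>B. L \<subseteq> X}" "Y = f ` (inv f ` Y)" by auto
      then show "Y \<in> (image f) ` {X\<in>B. L \<subseteq> X}" by (rule rev_image_eqI)
    qed
  qed
  show ?thesis using card_image[OF inj] im by simp
qed

theorem lemma11:
  fixes S :: "('a::{finite,field} ^ 'n) set set"
    and G :: "('a ^ 'n \<Rightarrow> 'a ^ 'n) set"
    and B :: "('a ^ 'n) set set"
    and g k :: nat
  assumes spread: "is_spread g S"
    and grp: "is_GammaL_subgroup G"
    and stab: "\<forall>f\<in>G. \<forall>X\<in>S. f ` X \<in> S"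
    and trans: "\<forall>L1 L2. sub_dim 2 L1 \<and> (\<forall>X\<in>S. \<not> L1 \<subseteq> X) \<and>
                        sub_dim 2 L2 \<and> (\<forall>X\<in>S. \<not> L2 \<subseteq> X) \<longrightarrow> (\<exists>f\<in>G. f ` L1 = L2)"
    and k: "k \<ge> 2"
    and B_sub: "\<forall>X\<in>B. sub_dim k X \<and> scattered S X"
    and B_inv: "\<forall>f\<in>G. \<forall>X\<in>B. f ` X \<in> B"
  shows "\<exists>lam::nat. (\<forall>L. sub_dim 2 L \<and> (\<forall>X\<in>S. \<not> L \<subseteq> X) \<longrightarrow> card {X\<in>B. L \<subseteq> X} = lam) \<and>
           (card S > 1 \<longrightarrow> is_GDD CARD('n) g k lam S B)"
proof -
  define P where "P = (\<lambda>L. sub_dim 2 L \<and> (\<forall>X\<in>S. \<not> L \<subseteq> (X::('a ^ 'n) set)))"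
  define lam where "lam = (if \<exists>L. P L then card {X\<in>B. (SOME L. P L) \<subseteq> X} else 0)"
  have L1: "card {X\<in>B. L \<subseteq> X} = lam" if PL: "P L" for L
  proof -
    have ex: "\<exists>L. P L" using that by blast
    have P0: "P (SOME L. P L)" using ex by (rule someI_ex)
    obtain f where f: "f \<in> G" "f ` (SOME L. P L) = L"
    proof -
      have "\<exists>f\<in>G. f ` (SOME L. P L) = L"
        using trans[rule_format, of "SOME L. P L" L] P0 PL unfolding P_def by simp
      then show ?thesis using that by blast
    qed
    have "card {X\<in>B. (SOME L. P L) \<subseteq> X} = card {X\<in>B. L \<subseteq> X}"
      using card_transfer[OF grp B_inv f(1), of "SOME L. P L"] f(2) by simp
    then show ?thesis using ex unfolding lam_def by simp
  qed
  have A: "\<forall>L. sub_dim 2 L \<and> (\<forall>X\<in>S. \<not> L \<subseteq> X) \<longrightarrow> card {X\<in>B. L \<subseteq> X} = lam"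
    using L1 unfolding P_def by simp
  have "card S > 1 \<longrightarrow> is_GDD CARD('n) g k lam S B"
  proof (rule impI)
    assume cs: "card S > 1"
    show "is_GDD CARD('n) g k lam S B"
    unfolding is_GDD_def
  proof (intro conjI allI impI)
    fix L :: "('a ^ 'n) set" assume "sub_dim 2 L"
    show "((\<exists>X\<in>S. L \<subseteq> X) \<and> (\<forall>X\<in>B. \<not> L \<subseteq> X)) \<or>
        ((\<forall>X\<in>S. \<not> L \<subseteq> X) \<and> card {X\<in>B. L \<subseteq> X} = lam)"
    proof (cases "\<exists>X\<in>S. L \<subseteq> X")
      case True
      have "\<forall>X\<in>B. \<not> L \<subseteq> X"
      proof (intro ballI notI)
        fix X assume "X \<in> B" "L \<subseteq> X"
        then have "scattered S X" using B_sub by blast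
        then show False using True \<open>sub_dim 2 L\<close> \<open>L \<subseteq> X\<close> unfolding scattered_def by blast
      qed
      then show ?thesis using True by blast
    next
      case False
      then have "\<forall>X\<in>S. \<not> L \<subseteq> X" by blast
      then show ?thesis using A \<open>sub_dim 2 L\<close> by simp
    qed
  next
    show "CARD('n) = CARD('n)" by (rule refl)
  next
    show "is_spread g S" by (rule spread)
  next
    show "card S > 1" by (rule cs)
  next
    show "\<forall>X\<in>B. sub_dim k X" using B_sub by blast
  qed
  qed
  with A show ?thesis by blast
qed

end
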